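(* Suppose the budget and utility parameters of users are drawn i.i.d. from a distribution $\mathcal{D}$ such that (i) for each good $j$, $\mathbb{P}_{\mathcal{D}}(u_j>0)>0$, and (ii) $\mathbf{u}\in[\underline{\mathbf{u}},\bar{\mathbf{u}}]$ and $w\in[\underline w,\bar w]$ with $\underline u,\underline w>0$. Then the price vectors $\mathbf{p}^t$ of the revealed preference algorithm described below remain strictly positive and bounded for all users $t\in[n]$ when $\gamma=\gamma_t=\bar D/\sqrt n$ for all $t\in[n]$, for some constant $\bar D>0$; that is, there are constants $0<\underline p\le\bar p$ with $\underline p\le p_j^t\le\bar p$ for all goods $j$ and all $t$.
   Context: Online Fisher market: $m$ divisible goods, good $j$ with capacity $c_j=nd_j$, $\mathbf{d}>\mathbf{0}$; $n$ users with $(w_t,\mathbf{u}_t)$ i.i.d. from $\mathcal{D}$. Given $\mathbf{p}^t$, user $t$ consumes an optimal solution $\mathbf{x}_t$ of $\max\mathbf{u}_t^\top\mathbf{x}$ s.t. $(\mathbf{p}^t)^\top\mathbf{x}\le w_t$, $\mathbf{x}\ge\mathbf{0}$. Revealed preference algorithm: initialize $\mathbf{p}^1>\mathbf{0}$; for $t=1,\dots,n$, user $t$ consumes $\mathbf{x}_t$ at price $\mathbf{p}^t$ and $\mathbf{p}^{t+1}=\mathbf{p}^t-\gamma_t(\mathbf{d}-\mathbf{x}_t)$ (no projection). The constants $\underline p,\bar p$ do not depend on $n$ or $t$. *)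

theory Defs
  imports "HOL-Probability.Probability"
begin

text \<open>Goods are indexed by j < m; vectors in R^m are functions nat => real
  (only the components j < m are meaningful).\<close>

definition budget_feasible :: "nat \<Rightarrow> (nat \<Rightarrow> real) \<Rightarrow> real \<Rightarrow> (nat \<Rightarrow> real) \<Rightarrow> bool" where
  "budget_feasible m p w y \<longleftrightarrow> (\<forall>j<m. 0 \<le> y j) \<and> (\<Sum>j<m. p j * y j) \<le> w"

definition optimal_consumption ::
  "nat \<Rightarrow> (nat \<Rightarrow> real) \<Rightarrow> real \<Rightarrow> (nat \<Rightarrow> real) \<Rightarrow> (nat \<Rightarrow> real) \<Rightarrow> bool" where
  "optimal_consumption m p w u x \<longleftrightarrow>
     budget_feasible m p w x \<and>
     (\<forall>y. budget_feasible m p w y \<longrightarrow> (\<Sum>j<m. u j * y j) \<le> (\<Sum>j<m. u j * x j))"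

text \<open>Users are indexed from 1 as in the paper.\<close>
definition rp_prefix ::
  "nat \<Rightarrow> (nat \<Rightarrow> real) \<Rightarrow> real \<Rightarrow> (nat \<Rightarrow> real) \<Rightarrow> (nat \<Rightarrow> real) \<Rightarrow> (nat \<Rightarrow> nat \<Rightarrow> real)
     \<Rightarrow> (nat \<Rightarrow> nat \<Rightarrow> real) \<Rightarrow> (nat \<Rightarrow> nat \<Rightarrow> real) \<Rightarrow> nat \<Rightarrow> bool" where
  "rp_prefix m d \<gamma> p1 W U x p k \<longleftrightarrow>
     (\<forall>j<m. p 1 j = p1 j) \<and>
     (\<forall>t\<in>{1..<k}. optimal_consumption m (p t) (W t) (U t) (x t) \<and>
                   (\<forall>j<m. p (Suc t) j = p t j - \<gamma> * (d j - x t j)))"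

end

theory Submission
  imports Defs
begin

lemma opt_spend:
  assumes m: "0 < m" and p: "\<forall>j<m. 0 < p j" and u: "\<forall>j<m. 0 < u j"
    and opt: "optimal_consumption m p w u x"
  shows "(\<Sum>j<m. p j * x j) = w"
proof (rule ccontr)
  assume ne: "(\<Sum>j<m. p j * x j) \<noteq> w"
  have feas: "\<forall>j<m. 0 \<le> x j" "(\<Sum>j<m. p j * x j) \<le> w"
    using opt by (auto simp: optimal_consumption_def budget_feasible_def)
  define c where "c = (w - (\<Sum>j<m. p j * x j)) / p 0"
  have p0: "0 < p 0" using p m by auto
  have c: "0 < c" using ne feas p0 by (auto simp: c_def)
  define y where "y = (\<lambda>j. x j + (if j = 0 then c else 0))"
  have "(\<Sum>j<m. p j * y j) = (\<Sum>j<m. p j * x j + (if j = 0 then p j * c else 0))"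
    by (rule sum.cong) (auto simp: y_def algebra_simps)
  also have "\<dots> = (\<Sum>j<m. p j * x j) + (\<Sum>j<m. if j = 0 then p j * c else 0)"
    by (rule sum.distrib)
  also have "\<dots> = (\<Sum>j<m. p j * x j) + p 0 * c" using m by (simp add: sum.delta)
  also have "\<dots> = w" using p0 by (simp add: c_def)
  finally have "budget_feasible m p w y"
    using feas c by (auto simp: budget_feasible_def y_def)
  hence le: "(\<Sum>j<m. u j * y j) \<le> (\<Sum>j<m. u j * x j)" using opt by (auto simp: optimal_consumption_def)
  have "(\<Sum>j<m. u j * y j) = (\<Sum>j<m. u j * x j + (if j = 0 then u j * c else 0))"
    by (rule sum.cong) (auto simp: y_def algebra_simps)
  also have "\<dots> = (\<Sum>j<m. u j * x j) + (\<Sum>j<m. if j = 0 then u j * c else 0)"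
    by (rule sum.distrib)
  also have "\<dots> = (\<Sum>j<m. u j * x j) + u 0 * c" using m by (simp add: sum.delta)
  finally show False using le u m c by (smt (verit) mult_pos_pos)
qed

lemma opt_ratio:
  assumes p: "\<forall>j<m. 0 < p j" and u: "\<forall>j<m. 0 < u j"
    and opt: "optimal_consumption m p w u x" and i: "i < m" and j: "j < m" and xi: "0 < x i"
  shows "u j * p i \<le> u i * p j"
proof (rule ccontr)
  assume c: "\<not> ?thesis"
  hence ij: "i \<noteq> j" by (auto simp: mult.commute)
  have feas: "\<forall>j<m. 0 \<le> x j" "(\<Sum>j<m. p j * x j) \<le> w"
    using opt by (auto simp: optimal_consumption_def budget_feasible_def)
  define y where "y = (\<lambda>k. x k + ((if k = j then x i * p i / p j else 0) - (if k = i then x i else 0)))"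
  have pj: "0 < p j" using p j by auto
  have "(\<Sum>k<m. p k * y k) = (\<Sum>k<m. p k * x k + ((if k = j then p k * (x i * p i / p j) else 0) - (if k = i then p k * x i else 0)))"
    by (rule sum.cong) (auto simp: y_def algebra_simps)
  also have "\<dots> = (\<Sum>k<m. p k * x k) + ((\<Sum>k<m. if k = j then p k * (x i * p i / p j) else 0) - (\<Sum>k<m. if k = i then p k * x i else 0))"
    by (simp add: sum.distrib sum_subtractf)
  also have "\<dots> = (\<Sum>k<m. p k * x k)" using i j pj by (simp add: sum.delta)
  moreover have "\<forall>k<m. 0 \<le> y k"
  proof (intro allI impI)
    fix k assume k: "k < m"
    have "0 < p i" using p i by auto
    hence "0 \<le> x i * p i / p j" using xi pj by simp
    thus "0 \<le> y k" using feas k ij by (auto simp: y_def)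
  qed
  ultimately have "budget_feasible m p w y"
    using feas by (auto simp: budget_feasible_def)
  hence le: "(\<Sum>k<m. u k * y k) \<le> (\<Sum>k<m. u k * x k)" using opt by (auto simp: optimal_consumption_def)
  have "(\<Sum>k<m. u k * y k) = (\<Sum>k<m. u k * x k + ((if k = j then u k * (x i * p i / p j) else 0) - (if k = i then u k * x i else 0)))"
    by (rule sum.cong) (auto simp: y_def algebra_simps)
  also have "\<dots> = (\<Sum>k<m. u k * x k) + ((\<Sum>k<m. if k = j then u k * (x i * p i / p j) else 0) - (\<Sum>k<m. if k = i then u k * x i else 0))"
    by (simp add: sum.distrib sum_subtractf)
  also have "\<dots> = (\<Sum>k<m. u k * x k) + (u j * (x i * p i / p j) - u i * x i)" using i j by (simp add: sum.delta)
  finally have "u j * (x i * p i / p j) \<le> u i * x i" using le by linarith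
  hence "u j * x i * p i \<le> u i * x i * p j" using pj by (simp add: field_simps)
  hence "x i * (u j * p i) \<le> x i * (u i * p j)" by (simp add: algebra_simps)
  thus False using c xi by (simp add: mult_le_cancel_left)
qed

lemma step:
  assumes m: "0 < m"
  and d: "\<forall>j<m. 0 < d j"
  and S: "S = (\<Sum>j<m. d j)"
  and Rpos: "0 < R"
  and uR: "\<forall>i<m. \<forall>j<m. u i / u j \<le> R"
  and u: "\<forall>j<m. 0 < u j"
  and th: "\<theta> = wl / (real m * (S + 4*S*R^2))"
  and wl: "0 < wl" "wl \<le> w" "w \<le> wh"
  and B: "2*real m*R/\<theta> \<le> B" "0 < B"
  and Dbar: "Dbar = (1/B) / (8*(S+1)*(R^2+1))"
  and g: "0 < \<gamma>" "\<gamma> \<le> Dbar"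
  and ph: "\<forall>j<m. wh / d j + Dbar*wh*B \<le> ph"
  and q: "\<forall>j<m. 0 < q j" "(\<Sum>j<m. 1/q j) \<le> B" "\<forall>j<m. q j \<le> ph"
  and opt: "optimal_consumption m q w u x"
  and q': "\<forall>j<m. q' j = q j - \<gamma>*(d j - x j)"
  shows "(\<forall>j<m. 0 < q' j) \<and> (\<Sum>j<m. 1/q' j) \<le> B \<and> (\<forall>j<m. q' j \<le> ph)"
proof -
  have x0: "\<forall>j<m. 0 \<le> x j"
    using opt by (auto simp: optimal_consumption_def budget_feasible_def)
  have spend: "(\<Sum>j<m. q j * x j) = w" using opt_spend[OF m q(1) u opt] .
  have Spos: "0 < S" unfolding S using m d by (intro sum_pos) auto
  have dS: "\<forall>j<m. d j \<le> S" unfolding S using d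
    by (auto intro!: member_le_sum simp: less_imp_le)
  have qL: "\<forall>j<m. 1/B \<le> q j"
  proof (intro allI impI)
    fix j assume j: "j < m"
    have "1 / q j \<le> (\<Sum>j<m. 1/q j)" using j q(1)
      by (intro member_le_sum) (auto simp: less_imp_le)
    hence "1 / q j \<le> B" using q(2) by linarith
    thus "1/B \<le> q j" using q(1) j B(2) by (simp add: field_simps)
  qed
  have p8: "0 < 8*(S+1)*(R^2+1)" using Spos
    by (intro mult_pos_pos) (auto simp: add_pos_nonneg add_nonneg_pos)
  have Dpos: "0 < Dbar" unfolding Dbar using B p8 by simp
  have Dkey: "Dbar * (8*(S+1)*(R^2+1)) = 1/B" unfolding Dbar using p8 by (metis less_irrefl nonzero_divide_eq_eq)
  have nn: "0 \<le> S*R^2" "0 \<le> R^2" using Spos by auto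
  have e1: "8*(S+1)*1 \<le> 8*(S+1)*(R^2+1)" using Spos by (intro mult_left_mono) auto
  have e2: "8*(S+1)*R^2 \<le> 8*(S+1)*(R^2+1)" using Spos by (intro mult_left_mono) auto
  have e3: "4*S*R^2 \<le> 8*(S+1)*R^2" using Spos by (intro mult_right_mono) auto
  have "Dbar * (2*S) \<le> Dbar * (8*(S+1)*(R^2+1))"
    using Dpos Spos nn by (intro mult_left_mono) (simp add: algebra_simps, simp)
  hence D1: "Dbar * (2*S) \<le> 1/B" using Dkey by simp
  have "Dbar * (4*S*R^2) \<le> Dbar * (8*(S+1)*(R^2+1))"
    using Dpos Spos nn by (intro mult_left_mono) (simp add: algebra_simps, simp)
  hence D2: "Dbar * (4*S*R^2) \<le> 1/B" using Dkey by simp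
  have gd: "\<forall>j<m. \<gamma> * d j \<le> q j / 2"
  proof (intro allI impI)
    fix j assume j: "j < m"
    have "\<gamma> * d j \<le> Dbar * S" using g dS d j by (intro mult_mono) auto
    moreover have "1/B \<le> q j" using qL j by simp
    ultimately show "\<gamma> * d j \<le> q j / 2" using D1 by linarith
  qed
  have half: "\<forall>j<m. q j / 2 \<le> q' j"
  proof (intro allI impI)
    fix j assume j: "j < m"
    have "0 \<le> \<gamma> * x j" using g x0 j by simp
    moreover have "q' j = q j - \<gamma> * d j + \<gamma> * x j" using q' j by (simp add: algebra_simps)
    moreover have "\<gamma> * d j \<le> q j / 2" using gd j by simp
    ultimately show "q j / 2 \<le> q' j" by linarith
  qed
  have pos: "\<forall>j<m. 0 < q' j" using half q(1) by (meson half_gt_zero order_less_le_trans)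
  have upper: "\<forall>j<m. q' j \<le> ph"
  proof (intro allI impI)
    fix j assume j: "j < m"
    show "q' j \<le> ph"
    proof (cases "x j \<le> d j")
      case True
      hence "q' j \<le> q j" using q' g j by (simp add: mult_nonneg_nonneg)
      moreover have "q j \<le> ph" using q(3) j by blast
      ultimately show ?thesis by linarith
    next
      case False
      have "q j * x j \<le> (\<Sum>j<m. q j * x j)" using j q(1) x0
        by (intro member_le_sum) (auto simp: less_imp_le)
      hence qx: "q j * x j \<le> wh" using spend wl by simp
      have "q j * d j < q j * x j" using False q(1) j by simp
      hence "q j * d j < wh" using qx by simp
      hence a: "q j < wh / d j" using d j by (simp add: field_simps)
      have "x j \<le> wh / q j" using qx q(1) j by (simp add: field_simps)
      also have "\<dots> = wh * (1 / q j)" by simp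
      also have "\<dots> \<le> wh * B"
      proof (intro mult_left_mono)
        show "1 / q j \<le> B" using qL j q(1) B(2) by (simp add: field_simps)
        show "0 \<le> wh" using wl by simp
      qed
      finally have xb: "x j \<le> wh * B" .
      have "\<gamma> * x j \<le> Dbar * (wh * B)" using g xb x0 j by (intro mult_mono) auto
      moreover have "q' j \<le> q j + \<gamma> * x j"
      proof -
        have "q' j = q j - \<gamma>*(d j - x j)" using q' j by blast
        moreover have "0 \<le> \<gamma> * d j" using g d j by (simp add: less_imp_le)
        ultimately show ?thesis by (simp add: algebra_simps)
      qed
      ultimately have "q' j \<le> wh / d j + Dbar * wh * B" using a by (simp add: mult.assoc)
      moreover have "wh / d j + Dbar * wh * B \<le> ph" using ph j by blast
      ultimately show ?thesis by linarith
    qed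
  qed
  obtain i where i: "i < m" "w / real m \<le> q i * x i"
  proof (rule ccontr)
    assume "\<not> thesis"
    hence lt: "\<forall>j<m. q j * x j < w / real m" using that by (meson not_le)
    have "(\<Sum>j<m. q j * x j) < (\<Sum>j<m. w / real m)"
      using m lt by (intro sum_strict_mono) auto
    thus False using spend m by simp
  qed
  have thpos: "0 < \<theta>" unfolding th using wl m Spos by (simp add: add_pos_nonneg)
  have xi: "0 < x i"
  proof -
    have "0 < w / real m" using wl m by simp
    hence "0 < q i * x i" using i by linarith
    moreover have "0 < q i" using q(1) i by blast
    ultimately show ?thesis by (simp add: zero_less_mult_iff)
  qed
  have ratio: "\<forall>j<m. q i \<le> R * q j"
  proof (intro allI impI)
    fix j assume j: "j < m"
    have "u j * q i \<le> u i * q j" using opt_ratio[OF q(1) u opt i(1) j xi] .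
    hence "q i \<le> (u i / u j) * q j" using u j by (simp add: field_simps)
    also have "\<dots> \<le> R * q j" using uR i j q(1) by (intro mult_right_mono) auto
    finally show "q i \<le> R * q j" .
  qed
  have sumB: "(\<Sum>j<m. 1/q' j) \<le> B"
  proof (cases "\<theta> \<le> q i")
    case True
    have "\<forall>j<m. 1 / q' j \<le> 2*R/\<theta>"
    proof (intro allI impI)
      fix j assume j: "j < m"
      have "q i \<le> R * q j" using ratio j by blast
      moreover have "R * q j \<le> R * (2 * q' j)"
      proof (intro mult_left_mono)
        have "q j / 2 \<le> q' j" using half j by blast
        thus "q j \<le> 2 * q' j" by linarith
      qed (use Rpos in simp)
      ultimately have "\<theta> \<le> R * (2 * q' j)" using True by linarith
      thus "1 / q' j \<le> 2*R/\<theta>" using pos j thpos by (simp add: field_simps)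
    qed
    hence "(\<Sum>j<m. 1/q' j) \<le> (\<Sum>j<m. 2*R/\<theta>)" by (intro sum_mono) auto
    also have "\<dots> = 2*real m*R/\<theta>" by simp
    finally show ?thesis using B by simp
  next
    case False
    define P where "P = q i"
    have P: "0 < P" "P < \<theta>" "1/B \<le> P" using False q(1) i qL by (auto simp: P_def)
    define K where "K = 2*\<gamma>*S*R^2"
    have K0: "0 \<le> K" unfolding K_def using g Spos by simp
    have KP: "K \<le> P / 2"
    proof -
      have "\<gamma> * (4*S*R^2) \<le> Dbar * (4*S*R^2)" using g Spos by (intro mult_right_mono) auto
      thus ?thesis using D2 P unfolding K_def by simp
    qed
    have others: "\<forall>j\<in>{..<m} - {i}. 1/q' j - 1/q j \<le> (2*\<gamma>*R^2/P^2) * d j"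
    proof
      fix j assume "j \<in> {..<m} - {i}"
      hence j: "j < m" by simp
      have qj: "0 < q j" "0 < q' j" using q(1) pos j by auto
      have dj: "0 < d j" "0 \<le> x j" "q j / 2 \<le> q' j" "q i \<le> R * q j"
        using d x0 half ratio j by blast+
      have qq: "q' j = q j - \<gamma>*(d j - x j)" using q' j by blast
      have "1/q' j - 1/q j = (q j - q' j) / (q j * q' j)"
        using qj by (simp add: field_simps)
      also have "\<dots> = \<gamma>*(d j - x j) / (q j * q' j)" using qq by simp
      also have "\<dots> \<le> \<gamma> * d j / (q j * q' j)"
        using qj g dj by (intro divide_right_mono) (auto simp: algebra_simps)
      also have "\<dots> \<le> \<gamma> * d j / (q j * (q j / 2))"
        using qj g dj by (intro divide_left_mono mult_left_mono) auto
      also have "\<dots> = 2 * \<gamma> * d j / (q j)^2" by (simp add: power2_eq_square field_simps)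
      also have "\<dots> \<le> 2 * \<gamma> * d j / (P / R)^2"
      proof (intro divide_left_mono)
        have "P / R \<le> q j" using dj Rpos unfolding P_def by (simp add: field_simps mult.commute)
        moreover have "0 < P / R" using P Rpos by simp
        ultimately show "(P/R)^2 \<le> (q j)^2" by (intro power_mono) auto
        show "0 \<le> 2 * \<gamma> * d j" using g dj by simp
        show "0 < (q j)^2 * (P/R)^2" using qj P Rpos by simp
      qed
      also have "\<dots> = (2*\<gamma>*R^2/P^2) * d j" using Rpos P by (simp add: field_simps power2_eq_square)
      finally show "1/q' j - 1/q j \<le> (2*\<gamma>*R^2/P^2) * d j" .
    qed
    have "(\<Sum>j\<in>{..<m} - {i}. 1/q' j - 1/q j) \<le> (\<Sum>j\<in>{..<m} - {i}. (2*\<gamma>*R^2/P^2) * d j)"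
      using others by (intro sum_mono) auto
    also have "\<dots> \<le> (\<Sum>j\<in>{..<m}. (2*\<gamma>*R^2/P^2) * d j)"
      using g d by (intro sum_mono2) auto
    also have "\<dots> = (2*\<gamma>*R^2/P^2) * S" unfolding S by (rule sum_distrib_left[symmetric])
    also have "\<dots> = K / P^2" unfolding K_def by simp
    finally have oth: "(\<Sum>j\<in>{..<m} - {i}. 1/q' j - 1/q j) \<le> K / P^2" .
    define \<Delta> where "\<Delta> = \<gamma> * (x i - d i)"
    have "wl / (real m * \<theta>) = S + 4*S*R^2" unfolding th using m Spos wl
      by (simp add: field_simps add_pos_nonneg)
    moreover have "wl / (real m * \<theta>) < w / (real m * P)"
      using P wl m thpos by (intro frac_less2 mult_strict_left_mono) auto
    moreover have "w / (real m * P) \<le> x i" using i P m unfolding P_def by (simp add: field_simps)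
    ultimately have "S + 4*S*R^2 < x i" by linarith
    moreover have "d i \<le> S" using dS i by blast
    ultimately have "d i + 4*S*R^2 \<le> x i" by linarith
    hence "\<gamma> * (4*S*R^2) \<le> \<Delta>" unfolding \<Delta>_def using g by (intro mult_left_mono) auto
    hence DK: "2 * K \<le> \<Delta>" unfolding K_def by (simp add: algebra_simps)
    have Dpos': "0 < \<Delta>"
    proof -
      have "0 < 4*S*R^2" using Spos Rpos by simp
      hence "0 < x i - d i" using \<open>d i + 4*S*R^2 \<le> x i\<close> by linarith
      thus ?thesis unfolding \<Delta>_def using g by simp
    qed
    have qi': "q' i = P + \<Delta>" using q' i unfolding P_def \<Delta>_def by (simp add: algebra_simps)
    have "K * (P + \<Delta>) \<le> \<Delta> * P"
    proof -
      have "\<Delta> * K \<le> \<Delta> * (P/2)" using KP Dpos' by (intro mult_left_mono) auto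
      moreover have "K * P \<le> (\<Delta>/2) * P" using DK P by (intro mult_right_mono) auto
      ultimately show ?thesis by (simp add: algebra_simps)
    qed
    hence nn2: "0 \<le> (\<Delta>*P - K*(P+\<Delta>)) / (P^2*(P+\<Delta>))"
      using P Dpos' by (intro divide_nonneg_pos) auto
    have pd: "P + \<Delta> \<noteq> 0" "P \<noteq> 0" using P Dpos' by auto
    have e: "\<Delta>/(P*(P+\<Delta>)) - K/P^2 = (\<Delta>*P - K*(P+\<Delta>)) / (P^2*(P+\<Delta>))"
      using pd by (simp add: divide_simps power2_eq_square)
    have e2: "1/q' i - 1/q i = -(\<Delta>/(P*(P+\<Delta>)))"
      using qi' P Dpos' unfolding P_def[symmetric] by (simp add: field_simps)
    have ii: "1/q' i - 1/q i \<le> - (K / P^2)" using e e2 nn2 by linarith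
    have "(\<Sum>j<m. 1/q' j) - (\<Sum>j<m. 1/q j) = (\<Sum>j<m. 1/q' j - 1/q j)"
      by (simp add: sum_subtractf)
    also have "\<dots> = (1/q' i - 1/q i) + (\<Sum>j\<in>{..<m} - {i}. 1/q' j - 1/q j)"
      using i by (subst sum.remove[of _ i]) auto
    also have "\<dots> \<le> 0" using ii oth by simp
    finally show ?thesis using q(2) by simp
  qed
  show ?thesis using pos sumB upper by blast
qed

lemma run:
  assumes m: "0 < m"
  and d: "\<forall>j<m. 0 < d j"
  and S: "S = (\<Sum>j<m. d j)"
  and Rpos: "0 < R"
  and th: "\<theta> = wl / (real m * (S + 4*S*R^2))"
  and wl0: "0 < wl"
  and B: "2*real m*R/\<theta> \<le> B" "0 < B"
  and Dbar: "Dbar = (1/B) / (8*(S+1)*(R^2+1))"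
  and g: "0 < \<gamma>" "\<gamma> \<le> Dbar"
  and ph: "\<forall>j<m. wh / d j + Dbar*wh*B \<le> ph"
  and UW: "\<forall>t\<in>{1..<k}. wl \<le> W t \<and> W t \<le> wh \<and> (\<forall>j<m. 0 < U t j) \<and> (\<forall>i<m. \<forall>j<m. U t i / U t j \<le> R)"
  and init: "(\<forall>j<m. 0 < p1 j) \<and> (\<Sum>j<m. 1/p1 j) \<le> B \<and> (\<forall>j<m. p1 j \<le> ph)"
  and rp: "rp_prefix m d \<gamma> p1 W U x p k"
  shows "1 \<le> t \<Longrightarrow> t \<le> k \<Longrightarrow> (\<forall>j<m. 0 < p t j) \<and> (\<Sum>j<m. 1/p t j) \<le> B \<and> (\<forall>j<m. p t j \<le> ph)"
proof (induction t)
  case 0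
  then show ?case by simp
next
  case (Suc t)
  show ?case
  proof (cases "t = 0")
    case True
    have e: "\<forall>j<m. p 1 j = p1 j" using rp by (simp add: rp_prefix_def)
    have "(\<Sum>j<m. 1/p 1 j) = (\<Sum>j<m. 1/p1 j)" using e by (intro sum.cong) auto
    thus ?thesis using True init e by simp
  next
    case False
    hence t1: "1 \<le> t" "t \<le> k" "t \<in> {1..<k}" using Suc.prems by auto
    have IH: "(\<forall>j<m. 0 < p t j) \<and> (\<Sum>j<m. 1/p t j) \<le> B \<and> (\<forall>j<m. p t j \<le> ph)"
      using Suc.IH t1 by blast
    have st: "optimal_consumption m (p t) (W t) (U t) (x t)"
      "\<forall>j<m. p (Suc t) j = p t j - \<gamma> * (d j - x t j)"
      using rp t1(3) unfolding rp_prefix_def by blast+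
    have uw: "wl \<le> W t" "W t \<le> wh" "\<forall>j<m. 0 < U t j" "\<forall>i<m. \<forall>j<m. U t i / U t j \<le> R"
      using UW t1(3) by blast+
    show ?thesis
      by (rule step[OF m d S Rpos uw(4) uw(3) th wl0 uw(1) uw(2) B Dbar g ph _ _ _ st(1) st(2)])
         (use IH in blast)+
  qed
qed

theorem lemma7:
  fixes m :: nat
    and d :: "nat \<Rightarrow> real"
    and p1 :: "nat \<Rightarrow> real"
    and D :: "(real \<times> (nat \<Rightarrow> real)) measure"
    and ul uh :: "nat \<Rightarrow> real"
    and wl wh :: real
  assumes d_pos: "\<forall>j<m. 0 < d j"
    and p1_pos: "\<forall>j<m. 0 < p1 j"
    and prob: "prob_space D"
    and pos_prob: "\<forall>j<m. {z \<in> space D. 0 < snd z j} \<in> sets D \<and>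
                          0 < measure D {z \<in> space D. 0 < snd z j}"
    and ul_pos: "\<forall>j<m. 0 < ul j \<and> ul j \<le> uh j"
    and wl_pos: "0 < wl" "wl \<le> wh"
    and support: "AE z in D. wl \<le> fst z \<and> fst z \<le> wh \<and>
                              (\<forall>j<m. ul j \<le> snd z j \<and> snd z j \<le> uh j)"
  shows "\<exists>Dbar > 0. \<exists>pl ph. 0 < pl \<and> pl \<le> ph \<and>
           (\<forall>n \<ge> 1. AE \<omega> in PiM {1..n} (\<lambda>_. D).
              \<forall>k\<in>{1..n}. \<forall>x p.
                 rp_prefix m d (Dbar / sqrt (real n)) p1 (\<lambda>t. fst (\<omega> t)) (\<lambda>t. snd (\<omega> t)) x p k
                 \<longrightarrow> (\<forall>j<m. pl \<le> p k j \<and> p k j \<le> ph))"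
proof (cases "m = 0")
  case True
  show ?thesis
    by (rule exI[of _ 1]) (auto intro: exI[of _ 1] simp: True)
next
  case False
  hence m: "0 < m" by simp
  define S where "S = (\<Sum>j<m. d j)"
  define R where "R = (\<Sum>i<m. uh i) * (\<Sum>j<m. 1 / ul j)"
  define \<theta> where "\<theta> = wl / (real m * (S + 4*S*R^2))"
  define B where "B = max (\<Sum>j<m. 1 / p1 j) (2*real m*R/\<theta>)"
  define Dbar where "Dbar = (1/B) / (8*(S+1)*(R^2+1))"
  define ph where "ph = (\<Sum>j<m. p1 j) + (\<Sum>j<m. wh / d j) + Dbar*wh*B"
  have Spos: "0 < S" unfolding S_def using m d_pos by (intro sum_pos) auto
  have uh0: "\<forall>j<m. 0 < uh j" using ul_pos by force
  have sumuh: "\<forall>i<m. uh i \<le> (\<Sum>i<m. uh i)"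
    using uh0 by (auto intro!: member_le_sum simp: less_imp_le)
  have sumul: "\<forall>j<m. 1 / ul j \<le> (\<Sum>j<m. 1 / ul j)"
    using ul_pos by (auto intro!: member_le_sum simp: less_imp_le)
  have s1: "0 < (\<Sum>i<m. uh i)" using m uh0 by (intro sum_pos) auto
  have s2: "0 < (\<Sum>j<m. 1 / ul j)" using m ul_pos by (intro sum_pos) auto
  have Rpos: "0 < R" unfolding R_def using s1 s2 by simp
  have thpos: "0 < \<theta>" unfolding \<theta>_def using wl_pos m Spos by (simp add: add_pos_nonneg)
  have Bth: "2*real m*R/\<theta> \<le> B" unfolding B_def by simp
  have Bpos: "0 < B" using Bth m Rpos thpos by (smt (verit) divide_pos_pos mult_pos_pos of_nat_0_less_iff)
  have p8: "0 < 8*(S+1)*(R^2+1)" using Spos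
    by (intro mult_pos_pos) (auto simp: add_pos_nonneg add_nonneg_pos)
  have Dpos: "0 < Dbar" unfolding Dbar_def using Bpos p8 by simp
  have whpos: "0 < wh" using wl_pos by simp
  have sp1: "0 \<le> (\<Sum>j<m. p1 j)" using p1_pos by (intro sum_nonneg) (simp add: less_imp_le)
  have swd: "\<forall>j<m. wh / d j \<le> (\<Sum>j<m. wh / d j)"
    using d_pos whpos by (auto intro!: member_le_sum simp: less_imp_le)
  have swd0: "0 \<le> (\<Sum>j<m. wh / d j)" using d_pos whpos by (intro sum_nonneg) (simp add: less_imp_le)
  have DwB: "0 \<le> Dbar*wh*B" using Dpos whpos Bpos by simp
  have ph: "\<forall>j<m. wh / d j + Dbar*wh*B \<le> ph"
    unfolding ph_def using swd sp1 by force
  have init: "(\<forall>j<m. 0 < p1 j) \<and> (\<Sum>j<m. 1/p1 j) \<le> B \<and> (\<forall>j<m. p1 j \<le> ph)"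
  proof (intro conjI)
    show "\<forall>j<m. 0 < p1 j" using p1_pos .
    show "(\<Sum>j<m. 1/p1 j) \<le> B" unfolding B_def by simp
    have "\<forall>j<m. p1 j \<le> (\<Sum>j<m. p1 j)"
      using p1_pos by (auto intro!: member_le_sum simp: less_imp_le)
    thus "\<forall>j<m. p1 j \<le> ph" unfolding ph_def using swd0 DwB by force
  qed
  have plph: "1/B \<le> ph"
  proof -
    have p10: "0 < p1 0" using p1_pos m by simp
    have "1 / p1 0 \<le> (\<Sum>j<m. 1/p1 j)" using p1_pos m
      by (intro member_le_sum) (auto simp: less_imp_le)
    hence "1 / p1 0 \<le> B" using init by linarith
    hence "1 / B \<le> p1 0" using p10 Bpos by (simp add: field_simps)
    moreover have "p1 0 \<le> ph" using init m by blast
    ultimately show ?thesis by linarith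
  qed
  define good where "good = (\<lambda>z::real \<times> (nat \<Rightarrow> real). wl \<le> fst z \<and> fst z \<le> wh \<and>
                              (\<forall>j<m. ul j \<le> snd z j \<and> snd z j \<le> uh j))"
  have goodR: "good z \<Longrightarrow> (\<forall>j<m. 0 < snd z j) \<and> (\<forall>i<m. \<forall>j<m. snd z i / snd z j \<le> R)" for z
  proof -
    assume gz: "good z"
    have pos: "\<forall>j<m. 0 < snd z j" using gz ul_pos unfolding good_def by force
    moreover have "\<forall>i<m. \<forall>j<m. snd z i / snd z j \<le> R"
    proof (intro allI impI)
      fix i j assume i: "i < m" and j: "j < m"
      have a: "snd z i \<le> uh i" "ul j \<le> snd z j" "0 < ul j" "0 < snd z j" "0 < uh i" "0 < snd z i"
        using gz ul_pos pos uh0 i j unfolding good_def by blast+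
      have "snd z i / snd z j \<le> uh i / ul j"
        using a by (intro frac_le) auto
      also have "\<dots> = uh i * (1 / ul j)" by simp
      also have "\<dots> \<le> (\<Sum>i<m. uh i) * (\<Sum>j<m. 1 / ul j)"
        using sumuh sumul i j a by (intro mult_mono) auto
      finally show "snd z i / snd z j \<le> R" unfolding R_def .
    qed
    ultimately show ?thesis by blast
  qed
  have main: "\<forall>n \<ge> 1. AE \<omega> in PiM {1..n} (\<lambda>_. D).
              \<forall>k\<in>{1..n}. \<forall>x p.
                 rp_prefix m d (Dbar / sqrt (real n)) p1 (\<lambda>t. fst (\<omega> t)) (\<lambda>t. snd (\<omega> t)) x p k
                 \<longrightarrow> (\<forall>j<m. 1/B \<le> p k j \<and> p k j \<le> ph)"
  proof (intro allI impI)
    fix n :: nat assume n: "1 \<le> n"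
    have AEg: "AE \<omega> in PiM {1..n} (\<lambda>_. D). \<forall>t\<in>{1..n}. good (\<omega> t)"
    proof (rule AE_finite_allI)
      show "finite {1..n}" by simp
      fix t assume "t \<in> {1..n}"
      thus "AE \<omega> in PiM {1..n} (\<lambda>_. D). good (\<omega> t)"
        using support prob unfolding good_def by (intro AE_PiM_component) auto
    qed
    have gam: "0 < Dbar / sqrt (real n)" "Dbar / sqrt (real n) \<le> Dbar"
    proof -
      have "1 \<le> sqrt (real n)" using n by simp
      thus "0 < Dbar / sqrt (real n)" "Dbar / sqrt (real n) \<le> Dbar"
        using Dpos by (auto simp: field_simps)
    qed
    show "AE \<omega> in PiM {1..n} (\<lambda>_. D). \<forall>k\<in>{1..n}. \<forall>x p.
                 rp_prefix m d (Dbar / sqrt (real n)) p1 (\<lambda>t. fst (\<omega> t)) (\<lambda>t. snd (\<omega> t)) x p k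
                 \<longrightarrow> (\<forall>j<m. 1/B \<le> p k j \<and> p k j \<le> ph)"
    proof (rule eventually_mono[OF AEg], intro ballI allI impI)
      fix \<omega> k x p j
      assume gw: "\<forall>t\<in>{1..n}. good (\<omega> t)" and k: "k \<in> {1..n}"
        and rp: "rp_prefix m d (Dbar / sqrt (real n)) p1 (\<lambda>t. fst (\<omega> t)) (\<lambda>t. snd (\<omega> t)) x p k"
        and j: "j < m"
      have UW: "\<forall>t\<in>{1..<k}. wl \<le> fst (\<omega> t) \<and> fst (\<omega> t) \<le> wh \<and> (\<forall>j<m. 0 < snd (\<omega> t) j) \<and>
                 (\<forall>i<m. \<forall>j<m. snd (\<omega> t) i / snd (\<omega> t) j \<le> R)"
      proof
        fix t assume "t \<in> {1..<k}"
        hence "t \<in> {1..n}" using k by auto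
        hence "good (\<omega> t)" using gw by blast
        thus "wl \<le> fst (\<omega> t) \<and> fst (\<omega> t) \<le> wh \<and> (\<forall>j<m. 0 < snd (\<omega> t) j) \<and>
                 (\<forall>i<m. \<forall>j<m. snd (\<omega> t) i / snd (\<omega> t) j \<le> R)"
          using goodR[of "\<omega> t"] unfolding good_def by blast
      qed
      have inv: "(\<forall>j<m. 0 < p k j) \<and> (\<Sum>j<m. 1/p k j) \<le> B \<and> (\<forall>j<m. p k j \<le> ph)"
        using run[where W="\<lambda>t. fst (\<omega> t)" and U="\<lambda>t. snd (\<omega> t)", OF m d_pos S_def Rpos \<theta>_def wl_pos(1) Bth Bpos Dbar_def gam ph UW init rp]
          k by auto
      have pk: "0 < p k j" using inv j by blast
      have "1 / p k j \<le> (\<Sum>j<m. 1/p k j)" using inv j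
        by (intro member_le_sum) (auto simp: less_imp_le)
      hence "1 / p k j \<le> B" using inv by linarith
      hence "1 / B \<le> p k j" using pk Bpos by (simp add: field_simps)
      moreover have "p k j \<le> ph" using inv j by blast
      ultimately show "1/B \<le> p k j \<and> p k j \<le> ph" by blast
    qed
  qed
  have pl0: "0 < 1/B" using Bpos by simp
  show ?thesis using Dpos pl0 plph main by blast
qed

end
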